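(* Assume (i) $b,f,g$ are bounded and uniformly continuous in all variables, and (ii) $\mathbb H(\theta)\neq\emptyset$ for all $\theta\in\mathbb X$ and $\theta\mapsto\mathbb H(\theta)$ is continuous with respect to the Hausdorff distance $d$. Then for any $\eta\in\mathbb L^2(\mathbb F;\mathbb R^N)$, $Z\in\mathbb L^2(\mathbb F;\mathbb R^{dN})$ and $\varepsilon>0$, there exist $\alpha^\varepsilon\in\mathcal A$ and $Z^\varepsilon\in\mathbb L^2(\mathbb F;\mathbb R^{dN})$ such that $\alpha^\varepsilon_t\in\mathcal E_\varepsilon(t,X_t,Z^\varepsilon_t)$ (for all $t,\omega$), $\mathbb E[\int_0^T|Z^\varepsilon_t-Z_t|^2dt]\le\varepsilon$, and, with $\Theta_t:=(t,X_t,Z_t)$, $$\mathbb E\Big[\int_0^T\Big|\,|\eta_t-h(\Theta_t,\alpha^\varepsilon_t)|-d\big(\eta_t,\mathbb H(\Theta_t)\big)\Big|^2dt\Big]\le\varepsilon.$$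
   Context: Fix integers $d,N\ge 1$ and $T>0$. Let $(\Omega,\mathcal F,\mathbb P)$ carry a standard $d$-dimensional Brownian motion $B$, $\mathbb F=\mathbb F^B$, and $X:=B$. For $i=1,\dots,N$, $A_i$ is a domain in some Euclidean space, $A:=A_1\times\cdots\times A_N$, $\mathcal A_i$ is the set of $\mathbb F$-progressively measurable $A_i$-valued processes, $\mathcal A:=\mathcal A_1\times\cdots\times\mathcal A_N$; $(a^{-i},\tilde a_i)$ denotes $a$ with $i$-th component replaced by $\tilde a_i$. Data: $b:[0,T]\times\mathbb R^d\times A\to\mathbb R^d$, $f:[0,T]\times\mathbb R^d\times A\to\mathbb R^N$, $g:\mathbb R^d\to\mathbb R^N$. Let $\mathbb X:=[0,T]\times\mathbb R^d\times\mathbb R^{dN}$, $\theta=(t,x,z)$, $z=(z^1,\dots,z^N)$, $z^i\in\mathbb R^d$, $\theta^i:=(t,x,z^i)$; $h_i(t,x,z^i,a):=f_i(t,x,a)+b(t,x,a)\cdot z^i$, $h(\theta,a):=(h_1(\theta^1,a),\dots,h_N(\theta^N,a))$. For $\varepsilon>0$, $\mathcal E_\varepsilon(\theta)$ is the set of $a\in A$ with $h_i(\theta^i,a)\ge h_i(\theta^i,(a^{-i},\tilde a_i))-\varepsilon$ for all $i$, $\tilde a_i\in A_i$; $\mathbb H_\varepsilon(\theta):=\{y\in\mathbb R^N:|y-h(\theta,a)|<\varepsilon$ for some $a\in\mathcal E_\varepsilon(\theta)\}$, $\mathbb H(\theta):=\bigcap_{\varepsilon>0}\mathbb H_\varepsilon(\theta)$.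 Hausdorff distance: $d(\mathbb H_1,\mathbb H_2)=[\sup_{y_1\in\mathbb H_1}d(y_1,\mathbb H_2)]\vee[\sup_{y_2\in\mathbb H_2}d(y_2,\mathbb H_1)]$, $d(y,\mathbb H'):=\inf_{y'\in\mathbb H'}|y-y'|$. $\mathbb L^2(\mathbb F;\mathbb R^m)$ denotes $\mathbb F$-progressively measurable $\mathbb R^m$-valued processes $\xi$ with $\mathbb E\int_0^T|\xi_t|^2dt<\infty$. *)

theory Defs
  imports "HOL-Analysis.Analysis" "HOL-Probability.Probability"
begin

text \<open>R^m is represented as the subspace of nat => real (product topology) of sequences
  vanishing from index m on; on it the product topology is the Euclidean one.\<close>

definition Rspace :: "nat \<Rightarrow> (nat \<Rightarrow> real) set" where
  "Rspace m = {v. \<forall>j\<ge>m. v j = 0}"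

definition is_domain_in :: "nat \<Rightarrow> (nat \<Rightarrow> real) set \<Rightarrow> bool" where
  "is_domain_in m D \<longleftrightarrow> D \<subseteq> Rspace m \<and> openin (top_of_set (Rspace m)) D
      \<and> connected D \<and> D \<noteq> {}"

definition profiles :: "('n \<Rightarrow> (nat \<Rightarrow> real) set) \<Rightarrow> ('n \<Rightarrow> nat \<Rightarrow> real) set" where
  "profiles A = {a. \<forall>i. a i \<in> A i}"

definition hh :: "(real \<Rightarrow> real^'d \<Rightarrow> ('n \<Rightarrow> nat \<Rightarrow> real) \<Rightarrow> real^'d)
    \<Rightarrow> (real \<Rightarrow> real^'d \<Rightarrow> ('n \<Rightarrow> nat \<Rightarrow> real) \<Rightarrow> real^'n)
    \<Rightarrow> 'n \<Rightarrow> real \<Rightarrow> real^'d \<Rightarrow> real^'d \<Rightarrow> ('n \<Rightarrow> nat \<Rightarrow> real) \<Rightarrow> real" where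
  "hh b f i t x zi a = f t x a $ i + b t x a \<bullet> zi"

definition hvec :: "(real \<Rightarrow> real^'d \<Rightarrow> ('n::finite \<Rightarrow> nat \<Rightarrow> real) \<Rightarrow> real^'d)
    \<Rightarrow> (real \<Rightarrow> real^'d \<Rightarrow> ('n \<Rightarrow> nat \<Rightarrow> real) \<Rightarrow> real^'n)
    \<Rightarrow> real \<times> (real^'d) \<times> (real^'d^'n) \<Rightarrow> ('n \<Rightarrow> nat \<Rightarrow> real) \<Rightarrow> real^'n" where
  "hvec b f \<theta> a = (\<chi> i. hh b f i (fst \<theta>) (fst (snd \<theta>)) (snd (snd \<theta>) $ i) a)"

definition NashEps :: "('n \<Rightarrow> (nat \<Rightarrow> real) set)
    \<Rightarrow> (real \<Rightarrow> real^'d \<Rightarrow> ('n::finite \<Rightarrow> nat \<Rightarrow> real) \<Rightarrow> real^'d)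
    \<Rightarrow> (real \<Rightarrow> real^'d \<Rightarrow> ('n \<Rightarrow> nat \<Rightarrow> real) \<Rightarrow> real^'n)
    \<Rightarrow> real \<Rightarrow> real \<times> (real^'d) \<times> (real^'d^'n) \<Rightarrow> ('n \<Rightarrow> nat \<Rightarrow> real) set" where
  "NashEps A b f \<epsilon> \<theta> = {a \<in> profiles A. \<forall>i. \<forall>ai \<in> A i.
      hh b f i (fst \<theta>) (fst (snd \<theta>)) (snd (snd \<theta>) $ i) a
        \<ge> hh b f i (fst \<theta>) (fst (snd \<theta>)) (snd (snd \<theta>) $ i) (a(i := ai)) - \<epsilon>}"

definition HHeps :: "('n \<Rightarrow> (nat \<Rightarrow> real) set)
    \<Rightarrow> (real \<Rightarrow> real^'d \<Rightarrow> ('n::finite \<Rightarrow> nat \<Rightarrow> real) \<Rightarrow> real^'d)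
    \<Rightarrow> (real \<Rightarrow> real^'d \<Rightarrow> ('n \<Rightarrow> nat \<Rightarrow> real) \<Rightarrow> real^'n)
    \<Rightarrow> real \<Rightarrow> real \<times> (real^'d) \<times> (real^'d^'n) \<Rightarrow> (real^'n) set" where
  "HHeps A b f \<epsilon> \<theta> = {y. \<exists>a \<in> NashEps A b f \<epsilon> \<theta>. norm (y - hvec b f \<theta> a) < \<epsilon>}"

definition HH :: "('n \<Rightarrow> (nat \<Rightarrow> real) set)
    \<Rightarrow> (real \<Rightarrow> real^'d \<Rightarrow> ('n::finite \<Rightarrow> nat \<Rightarrow> real) \<Rightarrow> real^'d)
    \<Rightarrow> (real \<Rightarrow> real^'d \<Rightarrow> ('n \<Rightarrow> nat \<Rightarrow> real) \<Rightarrow> real^'n)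
    \<Rightarrow> real \<times> (real^'d) \<times> (real^'d^'n) \<Rightarrow> (real^'n) set" where
  "HH A b f \<theta> = (\<Inter>\<epsilon>\<in>{0<..}. HHeps A b f \<epsilon> \<theta>)"

definition hausd :: "'a::metric_space set \<Rightarrow> 'a set \<Rightarrow> ereal" where
  "hausd H1 H2 = max (SUP y\<in>H1. ereal (infdist y H2)) (SUP y\<in>H2. ereal (infdist y H1))"

definition std_brownian :: "'w measure \<Rightarrow> real \<Rightarrow> (real \<Rightarrow> 'w \<Rightarrow> real^'d) \<Rightarrow> bool" where
  "std_brownian M T B \<longleftrightarrow>
     (\<forall>t\<in>{0..T}. B t \<in> borel_measurable M)
   \<and> (\<forall>\<omega>\<in>space M. B 0 \<omega> = 0 \<and> continuous_on {0..T} (\<lambda>t. B t \<omega>))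
   \<and> (\<forall>s t. 0 \<le> s \<and> s < t \<and> t \<le> T \<longrightarrow>
        prob_space.indep_vars M (\<lambda>_. borel) (\<lambda>j \<omega>. (B t \<omega> - B s \<omega>) $ j) UNIV
      \<and> (\<forall>j. distributed M lborel (\<lambda>\<omega>. (B t \<omega> - B s \<omega>) $ j) (normal_density 0 (sqrt (t - s)))))
   \<and> (\<forall>(n::nat) (u::nat \<Rightarrow> real). 0 \<le> u 0 \<and> (\<forall>k<n. u k < u (Suc k)) \<and> u n \<le> T \<longrightarrow>
        prob_space.indep_vars M (\<lambda>_. borel) (\<lambda>k \<omega>. B (u (Suc k)) \<omega> - B (u k) \<omega>) {..<n})"

definition natfilt :: "'w measure \<Rightarrow> real \<Rightarrow> (real \<Rightarrow> 'w \<Rightarrow> real^'d) \<Rightarrow> real \<Rightarrow> 'w measure" where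
  "natfilt M T B t = sigma (space M)
      (\<Union>s\<in>{0..min t T}. {B s -` U \<inter> space M | U. U \<in> sets borel})"

definition progressive :: "(real \<Rightarrow> 'w measure) \<Rightarrow> real \<Rightarrow> (real \<Rightarrow> 'w \<Rightarrow> 'v::topological_space) \<Rightarrow> bool" where
  "progressive F T \<xi> \<longleftrightarrow> (\<forall>t\<in>{0..T}.
      (\<lambda>(s, \<omega>). \<xi> s \<omega>) \<in> borel_measurable (restrict_space lborel {0..t} \<Otimes>\<^sub>M F t))"

definition L2proc :: "'w measure \<Rightarrow> (real \<Rightarrow> 'w measure) \<Rightarrow> real \<Rightarrow> (real \<Rightarrow> 'w \<Rightarrow> 'v::real_normed_vector) \<Rightarrow> bool" where
  "L2proc M F T \<xi> \<longleftrightarrow> progressive F T \<xi> \<and>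
     (\<integral>\<^sup>+\<omega>. (\<integral>\<^sup>+t\<in>{0..T}. ennreal ((norm (\<xi> t \<omega>))\<^sup>2) \<partial>lborel) \<partial>M) < \<infinity>"

end

theory Submission
  imports Defs
begin


lemma natfilt_meas:
  fixes B :: "real \<Rightarrow> 'w \<Rightarrow> real^'d"
  assumes "u \<in> {0..min t T}"
  shows "B u \<in> borel_measurable (natfilt M T B t)"
proof -
  let ?G = "(\<Union>s\<in>{0..min t T}. {B s -` U \<inter> space M | U. U \<in> sets borel})"
  have G: "?G \<subseteq> Pow (space M)" by auto
  have sp: "space (natfilt M T B t) = space M" unfolding natfilt_def by (simp add: space_measure_of_conv)
  have se: "sets (natfilt M T B t) = sigma_sets (space M) ?G" unfolding natfilt_def
    using sets_measure_of[OF G] by simp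
  show ?thesis
    unfolding measurable_def
  proof (safe)
    fix U :: "(real^'d) set" assume "U \<in> sets borel"
    then have "B u -` U \<inter> space M \<in> ?G" using assms by blast
    then show "B u -` U \<inter> space (natfilt M T B t) \<in> sets (natfilt M T B t)"
      unfolding sp se by (rule sigma_sets.Basic)
  qed (auto)
qed

lemma ceil_approx: "(\<lambda>n::nat. real_of_int (ceiling (s * 2^n)) / 2^n) \<longlonglongrightarrow> (s::real)"
proof (rule real_tendsto_sandwich[where f="\<lambda>n. s" and h="\<lambda>n. s + 1/2^n"])
  show "\<forall>\<^sub>F n in sequentially. s \<le> real_of_int (ceiling (s * 2^n)) / 2^n"
  proof (intro always_eventually allI)
    fix n::nat have "s * 2^n \<le> ceiling (s * 2^n)" by linarith
    then show "s \<le> real_of_int (ceiling (s * 2^n)) / 2^n" by (simp add: field_simps)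
  qed
  show "\<forall>\<^sub>F n in sequentially. real_of_int (ceiling (s * 2^n)) / 2^n \<le> s + 1/2^n"
  proof (intro always_eventually allI)
    fix n::nat have "ceiling (s * 2^n) \<le> s * 2^n + 1" by linarith
    then show "real_of_int (ceiling (s * 2^n)) / 2^n \<le> s + 1/2^n" by (simp add: field_simps)
  qed
  have "(\<lambda>n::nat. 1 / 2^n :: real) \<longlonglongrightarrow> 0"
    by (simp add: LIMSEQ_divide_realpow_zero)
  then show "(\<lambda>n. s + 1/2^n) \<longlonglongrightarrow> s" using tendsto_add[OF tendsto_const, of _ 0 sequentially s] by simp
qed simp

lemma B_prog:
  assumes BM: "std_brownian M T B" and t: "t \<in> {0..T}"
  shows "(\<lambda>(s, \<omega>). B s \<omega>) \<in> borel_measurable (restrict_space lborel {0..t} \<Otimes>\<^sub>M natfilt M T B t)"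
proof -
  let ?P = "restrict_space lborel {0..t} \<Otimes>\<^sub>M natfilt M T B t"
  define q where "q n s = min t (max 0 (real_of_int (ceiling (s * 2^n)) / 2^n))" for n::nat and s::real
  have meas: "(\<lambda>x. B (q n (fst x)) (snd x)) \<in> borel_measurable ?P" for n
  proof -
    have "(\<lambda>x. B (min t (max 0 (real_of_int i / 2^n))) (snd x)) \<in> borel_measurable ?P" for i :: int
    proof -
      have "B (min t (max 0 (real_of_int i / 2^n))) \<in> borel_measurable (natfilt M T B t)"
        using t by (intro natfilt_meas) auto
      then show ?thesis by measurable
    qed
    moreover have "(\<lambda>x. ceiling (fst x * 2^n)) \<in> measurable ?P (count_space UNIV)"
    proof -
      have "(\<lambda>x. fst x) \<in> borel_measurable ?P"
        by (rule measurable_compose[OF measurable_fst]) (simp add: measurable_restrict_space1)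
      then show ?thesis by measurable
    qed
    ultimately show ?thesis unfolding q_def
      by (rule measurable_compose_countable'[where I=UNIV]) auto
  qed
  show ?thesis
  proof (rule borel_measurable_LIMSEQ_metric[OF meas])
    fix x assume x: "x \<in> space ?P"
    obtain s \<omega> where xs: "x = (s, \<omega>)" by (cases x)
    have s: "s \<in> {0..t}" and w: "\<omega> \<in> space M" using x xs
      by (auto simp: space_pair_measure natfilt_def space_measure_of_conv)
    have cont: "continuous_on {0..T} (\<lambda>t. B t \<omega>)" using BM w unfolding std_brownian_def by auto
    have "(\<lambda>n. q n s) \<longlonglongrightarrow> min t (max 0 s)" unfolding q_def
      by (intro tendsto_min tendsto_max tendsto_const ceil_approx)
    then have qs: "(\<lambda>n. q n s) \<longlonglongrightarrow> s" using s by simp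
    have "(\<lambda>n. B (q n s) \<omega>) \<longlonglongrightarrow> B s \<omega>"
      apply (rule continuous_on_tendsto_compose[OF cont qs])
      using s t apply simp
      using t unfolding q_def by (auto intro!: always_eventually)
    then show "(\<lambda>i. B (q i (fst x)) (snd x)) \<longlonglongrightarrow> (case x of (s, \<omega>) \<Rightarrow> B s \<omega>)"
      using xs by simp
  qed
qed



lemma hh_cont:
  fixes A :: "'n::finite \<Rightarrow> (nat \<Rightarrow> real) set"
    and b :: "real \<Rightarrow> real^'d \<Rightarrow> ('n \<Rightarrow> nat \<Rightarrow> real) \<Rightarrow> real^'d"
    and f :: "real \<Rightarrow> real^'d \<Rightarrow> ('n \<Rightarrow> nat \<Rightarrow> real) \<Rightarrow> real^'n"
    and z0 :: "real^'d^'n"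
  assumes b_bdd: "\<exists>C. \<forall>t\<in>{0..T}. \<forall>x. \<forall>a\<in>profiles A. norm (b t x a) \<le> C"
    and b_uc: "\<forall>e>0. \<exists>\<delta>>0. \<forall>t\<in>{0..T}. \<forall>t'\<in>{0..T}. \<forall>x x'. \<forall>a\<in>profiles A. \<forall>a'\<in>profiles A.
        \<bar>t - t'\<bar> < \<delta> \<and> dist x x' < \<delta> \<and> (\<forall>i j. \<bar>a i j - a' i j\<bar> < \<delta>)
        \<longrightarrow> dist (b t x a) (b t' x' a') < e"
    and f_uc: "\<forall>e>0. \<exists>\<delta>>0. \<forall>t\<in>{0..T}. \<forall>t'\<in>{0..T}. \<forall>x x'. \<forall>a\<in>profiles A. \<forall>a'\<in>profiles A.
        \<bar>t - t'\<bar> < \<delta> \<and> dist x x' < \<delta> \<and> (\<forall>i j. \<bar>a i j - a' i j\<bar> < \<delta>)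
        \<longrightarrow> dist (f t x a) (f t' x' a') < e"
    and t0: "t0 \<in> {0..T}" and k: "\<kappa> > 0"
  shows "\<exists>r>0. \<forall>t x z. t \<in> {0..T} \<longrightarrow> dist (t, x, z) (t0, x0, z0) < r \<longrightarrow>
     (\<forall>a\<in>profiles A. \<forall>i. \<bar>hh b f i t x (z$i) a - hh b f i t0 x0 (z0$i) a\<bar> < \<kappa>)"
proof -
  obtain C where C: "\<forall>t\<in>{0..T}. \<forall>x. \<forall>a\<in>profiles A. norm (b t x a) \<le> C" using b_bdd by blast
  define K where "K = \<bar>C\<bar> + 1"
  have K: "K > 0" and CK: "\<forall>t\<in>{0..T}. \<forall>x. \<forall>a\<in>profiles A. norm (b t x a) \<le> K"
  proof -
    show "K > 0" unfolding K_def by simp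
    show "\<forall>t\<in>{0..T}. \<forall>x. \<forall>a\<in>profiles A. norm (b t x a) \<le> K"
    proof (intro ballI allI)
      fix t x a assume "t \<in> {0..T}" "a \<in> profiles A"
      then have "norm (b t x a) \<le> C" using C by blast
      then show "norm (b t x a) \<le> K" unfolding K_def by linarith
    qed
  qed
  define Z where "Z = norm z0 + 1"
  have Z: "Z > 0" unfolding Z_def by (simp add: add_nonneg_pos)
  obtain d1 where d1: "d1 > 0" and D1: "\<forall>t\<in>{0..T}. \<forall>t'\<in>{0..T}. \<forall>x x'. \<forall>a\<in>profiles A. \<forall>a'\<in>profiles A.
        \<bar>t - t'\<bar> < d1 \<and> dist x x' < d1 \<and> (\<forall>i j. \<bar>a i j - a' i j\<bar> < d1)
        \<longrightarrow> dist (f t x a) (f t' x' a') < \<kappa>/2"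
    using f_uc[rule_format, of "\<kappa>/2"] k by auto
  obtain d2 where d2: "d2 > 0" and D2: "\<forall>t\<in>{0..T}. \<forall>t'\<in>{0..T}. \<forall>x x'. \<forall>a\<in>profiles A. \<forall>a'\<in>profiles A.
        \<bar>t - t'\<bar> < d2 \<and> dist x x' < d2 \<and> (\<forall>i j. \<bar>a i j - a' i j\<bar> < d2)
        \<longrightarrow> dist (b t x a) (b t' x' a') < \<kappa>/(4*Z)"
    using b_uc[rule_format, of "\<kappa>/(4*Z)"] k Z by auto
  define r where "r = min (min d1 d2) (\<kappa>/(4*K))"
  have r: "r > 0" unfolding r_def using d1 d2 k K by simp
  show ?thesis
  proof (intro exI[of _ r] conjI r allI impI ballI)
    fix t x z a i
    assume t: "t \<in> {0..T}" and d: "dist (t, x, z) (t0, x0, z0) < r" and a: "a \<in> profiles A"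
    have dt: "\<bar>t - t0\<bar> < r" using d dist_fst_le[of "(t, x, z)" "(t0, x0, z0)"] by (simp add: dist_real_def)
    have dxz: "dist (x, z) (x0, z0) < r" using d dist_snd_le[of "(t, x, z)" "(t0, x0, z0)"] by simp
    have dx: "dist x x0 < r" using dxz dist_fst_le[of "(x, z)" "(x0, z0)"] by simp
    have dz: "dist z z0 < r" using dxz dist_snd_le[of "(x, z)" "(x0, z0)"] by simp
    have dzi: "norm (z$i - z0$i) < r" using dz Finite_Cartesian_Product.norm_nth_le[of "z - z0" i] by (simp add: dist_norm)
    have prA: "\<forall>i j. \<bar>a i j - a i j\<bar> < e" if "e > 0" for e using that by simp
    have ff: "dist (f t x a) (f t0 x0 a) < \<kappa>/2"
      using D1[rule_format, OF t t0 a a] dt dx prA[OF d1] unfolding r_def by simp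
    have fi: "\<bar>f t x a $ i - f t0 x0 a $ i\<bar> < \<kappa>/2"
      using ff Finite_Cartesian_Product.norm_nth_le[of "f t x a - f t0 x0 a" i] by (simp add: dist_norm)
    have bb: "norm (b t x a - b t0 x0 a) < \<kappa>/(4*Z)"
      using D2[rule_format, OF t t0 a a] dt dx prA[OF d2] unfolding r_def by (simp add: dist_norm)
    have "\<bar>b t x a \<bullet> (z$i) - b t0 x0 a \<bullet> (z0$i)\<bar>
        = \<bar>b t x a \<bullet> (z$i - z0$i) + (b t x a - b t0 x0 a) \<bullet> (z0$i)\<bar>"
      by (simp add: inner_diff_left inner_diff_right)
    also have "\<dots> \<le> norm (b t x a) * norm (z$i - z0$i) + norm (b t x a - b t0 x0 a) * norm (z0$i)"
      by (rule order_trans[OF abs_triangle_ineq add_mono[OF Cauchy_Schwarz_ineq2 Cauchy_Schwarz_ineq2]])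
    also have "\<dots> \<le> K * (\<kappa>/(4*K)) + (\<kappa>/(4*Z)) * Z"
    proof (rule add_mono)
      show "norm (b t x a) * norm (z$i - z0$i) \<le> K * (\<kappa>/(4*K))"
        using CK t a dzi K unfolding r_def by (intro mult_mono) auto
      have "norm (z0$i) \<le> Z" using Finite_Cartesian_Product.norm_nth_le[of z0 i] unfolding Z_def by simp
      then show "norm (b t x a - b t0 x0 a) * norm (z0$i) \<le> (\<kappa>/(4*Z)) * Z"
        using bb k Z by (intro mult_mono) auto
    qed
    also have "\<dots> = \<kappa>/2" using K Z by (simp add: field_simps)
    finally have bi: "\<bar>b t x a \<bullet> (z$i) - b t0 x0 a \<bullet> (z0$i)\<bar> \<le> \<kappa>/2" .
    show "\<bar>hh b f i t x (z$i) a - hh b f i t0 x0 (z0$i) a\<bar> < \<kappa>"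
      unfolding hh_def using fi bi by linarith
  qed
qed



lemma infdist_ge: "A \<noteq> {} \<Longrightarrow> (\<And>x. x \<in> A \<Longrightarrow> c \<le> dist y x) \<Longrightarrow> c \<le> infdist y A"
  by (simp add: infdist_notempty cINF_greatest)

lemma infdist_near: assumes "A \<noteq> {}" "e > 0" obtains x where "x \<in> A" "dist y x < infdist y A + e"
proof -
  have "(INF a\<in>A. dist y a) < infdist y A + e" using assms by (simp add: infdist_notempty)
  then obtain x where "x \<in> A" "dist y x < infdist y A + e"
    using cINF_less_iff[of A "dist y"] assms by (auto intro: bdd_belowI2[of _ 0])
  then show ?thesis using that by blast
qed

lemma hausd_lt:
  assumes "hausd H1 H2 < ereal e"
  shows "\<And>y. y \<in> H1 \<Longrightarrow> infdist y H2 < e" "\<And>y. y \<in> H2 \<Longrightarrow> infdist y H1 < e"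
proof -
  fix y assume "y \<in> H1"
  then have "ereal (infdist y H2) \<le> hausd H1 H2" unfolding hausd_def
    by (intro order_trans[OF SUP_upper max.cobounded1]) auto
  then have "ereal (infdist y H2) < ereal e" using assms by (rule order.strict_trans1)
  then show "infdist y H2 < e" by simp
next
  fix y assume "y \<in> H2"
  then have "ereal (infdist y H1) \<le> hausd H1 H2" unfolding hausd_def
    by (intro order_trans[OF SUP_upper max.cobounded2]) auto
  then have "ereal (infdist y H1) < ereal e" using assms by (rule order.strict_trans1)
  then show "infdist y H1 < e" by simp
qed

lemma hvec_diff:
  fixes b :: "real \<Rightarrow> real^'d \<Rightarrow> ('n::finite \<Rightarrow> nat \<Rightarrow> real) \<Rightarrow> real^'d"
  assumes "\<forall>i. \<bar>hh b f i t x (z$i) a - hh b f i t0 x0 (z0$i) a\<bar> < \<kappa>"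
  shows "norm (hvec b f (t,x,z) a - hvec b f (t0,x0,z0) a) \<le> real CARD('n) * \<kappa>"
proof -
  have "norm (hvec b f (t,x,z) a - hvec b f (t0,x0,z0) a)
      \<le> (\<Sum>i\<in>(UNIV::'n set). \<bar>(hvec b f (t,x,z) a - hvec b f (t0,x0,z0) a) $ i\<bar>)"
    by (rule norm_le_l1_cart)
  also have "\<dots> \<le> (\<Sum>i\<in>(UNIV::'n set). \<kappa>)"
    using assms by (intro sum_mono) (auto simp: hvec_def less_imp_le)
  finally show ?thesis by simp
qed



lemma local_good:
  fixes A :: "'n::finite \<Rightarrow> (nat \<Rightarrow> real) set"
    and b :: "real \<Rightarrow> real^'d \<Rightarrow> ('n \<Rightarrow> nat \<Rightarrow> real) \<Rightarrow> real^'d"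
    and f :: "real \<Rightarrow> real^'d \<Rightarrow> ('n \<Rightarrow> nat \<Rightarrow> real) \<Rightarrow> real^'n"
    and z0 :: "real^'d^'n" and y0 :: "real^'n"
  assumes hc: "\<And>t0 x0 z0 \<kappa>. t0 \<in> {0..T} \<Longrightarrow> \<kappa> > 0 \<Longrightarrow> \<exists>r>0. \<forall>t x z. t \<in> {0..T} \<longrightarrow> dist (t, x, z) (t0, x0, z0) < r \<longrightarrow>
     (\<forall>a\<in>profiles A. \<forall>i. \<bar>hh b f i t x (z$i) a - hh b f i t0 x0 (z0$i) a\<bar> < \<kappa>)"
    and H_ne: "\<forall>\<theta>\<in>{0..T} \<times> UNIV. HH A b f \<theta> \<noteq> {}"
    and H_cont: "\<forall>\<theta>\<in>{0..T} \<times> UNIV. \<forall>e>0. \<exists>\<delta>>0. \<forall>\<theta>'\<in>{0..T} \<times> UNIV.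
        dist \<theta>' \<theta> < \<delta> \<longrightarrow> hausd (HH A b f \<theta>') (HH A b f \<theta>) < ereal e"
    and eps: "\<epsilon> > 0" and d0: "\<delta>0 > 0" and t0: "t0 \<in> {0..T}"
  shows "\<exists>r>0. \<exists>a. \<forall>t x z y. t \<in> {0..T} \<longrightarrow> dist ((t, x, z), y) ((t0, x0, z0), y0) < r \<longrightarrow>
     a \<in> NashEps A b f \<epsilon> (t, x, z) \<and>
     \<bar>norm (y - hvec b f (t, x, z) a) - infdist y (HH A b f (t, x, z))\<bar> \<le> \<delta>0"
proof -
  define c where "c = real CARD('n)"
  have c: "c \<ge> 0" unfolding c_def by simp
  define \<kappa> where "\<kappa> = min (\<epsilon>/3) (\<delta>0/(2*(3+c)))"
  have k: "\<kappa> > 0" unfolding \<kappa>_def using eps d0 c by simp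
  have k3: "3 * \<kappa> \<le> \<epsilon>" unfolding \<kappa>_def by linarith
  have "(3 + c) * \<kappa> \<le> \<delta>0 / 2"
  proof -
    have "\<kappa> \<le> \<delta>0/(2*(3+c))" unfolding \<kappa>_def by linarith
    then have "(3 + c) * \<kappa> \<le> (3 + c) * (\<delta>0/(2*(3+c)))" using c by (intro mult_left_mono) auto
    also have "\<dots> = \<delta>0 / 2" using c by (simp add: field_simps)
    finally show ?thesis .
  qed
  then have kc: "3 * \<kappa> + c * \<kappa> \<le> \<delta>0 / 2" by (simp add: algebra_simps)
  define \<theta>0 where "\<theta>0 = (t0, x0, z0)"
  have th0: "\<theta>0 \<in> {0..T} \<times> UNIV" unfolding \<theta>0_def using t0 by simp
  define H0 where "H0 = HH A b f \<theta>0"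
  have H0ne: "H0 \<noteq> {}" using H_ne th0 unfolding H0_def by blast
  define D0 where "D0 = infdist y0 H0"
  obtain ys where ys: "ys \<in> H0" "dist y0 ys < D0 + \<kappa>"
    using infdist_near[OF H0ne k, of y0] unfolding D0_def by blast
  have D0ys: "D0 \<le> dist y0 ys" unfolding D0_def by (rule infdist_le[OF ys(1)])
  have "ys \<in> HHeps A b f \<kappa> \<theta>0" using ys(1) k unfolding H0_def HH_def by auto
  then obtain a where a: "a \<in> NashEps A b f \<kappa> \<theta>0" and ya: "norm (ys - hvec b f \<theta>0 a) < \<kappa>"
    unfolding HHeps_def by blast
  have aP: "a \<in> profiles A" using a unfolding NashEps_def by blast
  have aN: "\<And>i ai. ai \<in> A i \<Longrightarrow> hh b f i t0 x0 (z0$i) a \<ge> hh b f i t0 x0 (z0$i) (a(i := ai)) - \<kappa>"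
    using a unfolding NashEps_def \<theta>0_def by auto
  obtain r1 where r1: "r1 > 0" and R1: "\<forall>t x z. t \<in> {0..T} \<longrightarrow> dist (t, x, z) (t0, x0, z0) < r1 \<longrightarrow>
     (\<forall>a\<in>profiles A. \<forall>i. \<bar>hh b f i t x (z$i) a - hh b f i t0 x0 (z0$i) a\<bar> < \<kappa>)"
    using hc[OF t0 k] by blast
  obtain r2 where r2: "r2 > 0" and R2: "\<forall>\<theta>'\<in>{0..T} \<times> UNIV. dist \<theta>' \<theta>0 < r2 \<longrightarrow> hausd (HH A b f \<theta>') H0 < ereal \<kappa>"
    using H_cont th0 k unfolding H0_def by blast
  define r where "r = min (min r1 r2) (\<delta>0/4)"
  have r: "r > 0" unfolding r_def using r1 r2 d0 by simp
  show ?thesis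
  proof (intro exI[of _ r] conjI r exI[of _ a] allI impI)
    fix t x z y
    assume t: "t \<in> {0..T}" and d: "dist ((t, x, z), y) ((t0, x0, z0), y0) < r"
    have dth: "dist (t, x, z) (t0, x0, z0) < r" using d dist_fst_le[of "((t, x, z), y)" "((t0, x0, z0), y0)"] by simp
    have dy: "dist y y0 < r" using d dist_snd_le[of "((t, x, z), y)" "((t0, x0, z0), y0)"] by simp
    have hcl: "\<forall>a\<in>profiles A. \<forall>i. \<bar>hh b f i t x (z$i) a - hh b f i t0 x0 (z0$i) a\<bar> < \<kappa>"
      using R1 t dth unfolding r_def by auto
    show "a \<in> NashEps A b f \<epsilon> (t, x, z)"
      unfolding NashEps_def
    proof (simp, intro conjI aP allI ballI)
      fix i ai assume ai: "ai \<in> A i"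
      have aiP: "a(i := ai) \<in> profiles A" using aP ai unfolding profiles_def by auto
      have 1: "\<bar>hh b f i t x (z$i) a - hh b f i t0 x0 (z0$i) a\<bar> < \<kappa>" using hcl aP by blast
      have 2: "\<bar>hh b f i t x (z$i) (a(i := ai)) - hh b f i t0 x0 (z0$i) (a(i := ai))\<bar> < \<kappa>"
        using hcl aiP by blast
      show "hh b f i t x (z $ i) (a(i := ai)) - \<epsilon> \<le> hh b f i t x (z $ i) a"
        using 1 2 aN[OF ai] k3 by linarith
    qed
    define \<theta> where "\<theta> = (t, x, z)"
    have thU: "\<theta> \<in> {0..T} \<times> UNIV" unfolding \<theta>_def using t by simp
    define H where "H = HH A b f \<theta>"
    have Hne: "H \<noteq> {}" using H_ne thU unfolding H_def by blast
    have hd: "hausd H H0 < ereal \<kappa>" using R2 thU dth unfolding H_def \<theta>_def \<theta>0_def r_def by auto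
    have hv: "norm (hvec b f (t, x, z) a - hvec b f (t0, x0, z0) a) \<le> c * \<kappa>"
      unfolding c_def by (rule hvec_diff) (use hcl aP in blast)
    have up: "infdist y H \<le> 2 * \<kappa> + dist y y0 + D0"
    proof -
      have "infdist ys H < \<kappa>" using hausd_lt(2)[OF hd ys(1)] .
      moreover have "infdist y H \<le> infdist ys H + dist y ys" by (rule infdist_triangle)
      moreover have "dist y ys \<le> dist y y0 + dist y0 ys" by (rule dist_triangle)
      ultimately show ?thesis using ys(2) by linarith
    qed
    have lo: "D0 - \<kappa> - dist y y0 \<le> infdist y H"
    proof (rule infdist_ge[OF Hne])
      fix h assume h: "h \<in> H"
      have "infdist h H0 < \<kappa>" using hausd_lt(1)[OF hd h] .
      moreover have "D0 \<le> infdist h H0 + dist y0 h" unfolding D0_def by (rule infdist_triangle)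
      moreover have "dist y0 h \<le> dist y0 y + dist y h" by (rule dist_triangle)
      ultimately show "D0 - \<kappa> - dist y y0 \<le> dist y h" by (simp add: dist_commute)
    qed
    define hv1 where "hv1 = hvec b f (t, x, z) a"
    define hv0 where "hv0 = hvec b f (t0, x0, z0) a"
    have N1: "dist y hv1 \<le> dist y y0 + dist y0 ys + dist ys hv0 + dist hv0 hv1"
      using dist_triangle[of y hv1 y0] dist_triangle[of y0 hv1 ys] dist_triangle[of ys hv1 hv0] by linarith
    have N2: "dist y0 ys \<le> dist y0 y + dist y hv1 + dist hv1 hv0 + dist hv0 ys"
      using dist_triangle[of y0 ys y] dist_triangle[of y ys hv1] dist_triangle[of hv1 ys hv0] by linarith
    have e1: "dist ys hv0 < \<kappa>" using ya unfolding \<theta>0_def hv0_def by (simp add: dist_norm)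
    have e2': "dist hv1 hv0 \<le> c * \<kappa>" using hv unfolding hv1_def hv0_def by (metis dist_norm)
    have e2: "dist hv0 hv1 \<le> c * \<kappa>" "dist hv1 hv0 \<le> c * \<kappa>" using e2' by (simp_all only: dist_commute)
    have ry: "dist y y0 \<le> \<delta>0/4" "dist y0 y \<le> \<delta>0/4" using dy unfolding r_def by (simp_all add: dist_commute)
    have "norm (y - hvec b f (t, x, z) a) = dist y hv1" unfolding hv1_def by (simp add: dist_norm)
    moreover have "dist y hv1 - infdist y H \<le> \<delta>0"
      using N1 e1 e2 ry up lo ys(2) kc k by linarith
    moreover have "infdist y H - dist y hv1 \<le> \<delta>0"
      using N2 e1 e2 ry up lo D0ys kc k by (simp add: dist_commute)
    ultimately show "\<bar>norm (y - hvec b f (t, x, z) a) - infdist y (HH A b f (t, x, z))\<bar> \<le> \<delta>0"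
      unfolding H_def \<theta>_def hv1_def by linarith
  qed
qed



lemma countable_select:
  fixes P :: "'p::{metric_space, second_countable_topology} set"
    and good :: "'p \<Rightarrow> 'a::topological_space \<Rightarrow> bool"
  assumes loc: "\<And>p0. p0 \<in> P \<Longrightarrow> \<exists>r>0. \<exists>a. \<forall>p\<in>P. dist p p0 < r \<longrightarrow> good p a"
  shows "\<exists>\<phi>. \<phi> \<in> borel_measurable borel \<and> (\<forall>p\<in>P. good p (\<phi> p))"
proof (cases "P = {}")
  case True then show ?thesis by (intro exI[of _ "\<lambda>_. undefined"]) auto
next
  case False
  define F where "F = {ball p0 r | p0 r. r > 0 \<and> (\<exists>a. \<forall>p\<in>P. dist p p0 < r \<longrightarrow> good p a)}"
  have Fo: "\<And>S. S \<in> F \<Longrightarrow> open S" unfolding F_def by auto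
  obtain F' where F': "F' \<subseteq> F" "countable F'" "\<Union>F' = \<Union>F" using Lindelof[OF Fo] by blast
  have PF: "P \<subseteq> \<Union>F"
  proof
    fix p0 assume "p0 \<in> P"
    then obtain r a where "r > 0" "\<forall>p\<in>P. dist p p0 < r \<longrightarrow> good p a" using loc by blast
    then have "ball p0 r \<in> F" unfolding F_def by blast
    moreover have "p0 \<in> ball p0 r" using \<open>r > 0\<close> by simp
    ultimately show "p0 \<in> \<Union>F" by blast
  qed
  have F'ne: "F' \<noteq> {}" using PF F'(3) False by auto
  define U where "U k = from_nat_into F' k" for k
  have UF: "U k \<in> F" for k unfolding U_def using from_nat_into[OF F'ne] F'(1) by blast
  have Uex: "\<exists>a. \<forall>p\<in>P. p \<in> U k \<longrightarrow> good p a" for k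
  proof -
    obtain p0 r a where "U k = ball p0 r" "\<forall>p\<in>P. dist p p0 < r \<longrightarrow> good p a"
      using UF[of k] unfolding F_def by blast
    then show ?thesis by (auto simp: dist_commute)
  qed
  define c where "c k = (SOME a. \<forall>p\<in>P. p \<in> U k \<longrightarrow> good p a)" for k
  have c: "\<And>k p. p \<in> P \<Longrightarrow> p \<in> U k \<Longrightarrow> good p (c k)"
    unfolding c_def using someI_ex[OF Uex] by blast
  define \<phi> where "\<phi> p = c (LEAST k. p \<in> U k)" for p
  have Uo: "open (U k)" for k using Fo UF by blast
  show ?thesis
  proof (intro exI[of _ \<phi>] conjI ballI)
    have "(\<lambda>p. LEAST k. p \<in> U k) \<in> measurable borel (count_space UNIV)"
    proof (rule measurable_Least)
      fix k
      have "U k \<in> sets borel" using Uo by auto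
      then show "(\<lambda>p. p \<in> U k) \<in> measurable borel (count_space UNIV)" by measurable
    qed
    then have "(\<lambda>x. (\<lambda>k x. c k) (LEAST k. x \<in> U k) x) \<in> borel_measurable borel"
      using measurable_compose_countable'[where I=UNIV and f="\<lambda>k x. c k" and g="\<lambda>x. LEAST k. x \<in> U k" and M=borel and N=borel]
      by simp
    then show "\<phi> \<in> borel_measurable borel" unfolding \<phi>_def by simp
  next
    fix p assume p: "p \<in> P"
    then obtain V where "V \<in> F'" "p \<in> V" using PF F'(3) by blast
    then obtain n where "U n = V" unfolding U_def using from_nat_into_surj[OF F'(2)] by blast
    then have "\<exists>k. p \<in> U k" using \<open>p \<in> V\<close> by blast
    then have "p \<in> U (LEAST k. p \<in> U k)" by (rule LeastI_ex)
    then show "good p (\<phi> p)" unfolding \<phi>_def using c p by blast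
  qed
qed


lemma set_nn_bound:
  fixes F :: "real \<Rightarrow> real"
  assumes "\<forall>t\<in>{0..T}. F t \<le> c" "c \<ge> 0" "T \<ge> 0"
  shows "(\<integral>\<^sup>+t\<in>{0..T}. ennreal (F t) \<partial>lborel) \<le> ennreal (c * T)"
proof -
  have "(\<integral>\<^sup>+t\<in>{0..T}. ennreal (F t) \<partial>lborel) \<le> (\<integral>\<^sup>+t. ennreal c * indicator {0..T} t \<partial>lborel)"
    using assms by (intro nn_integral_mono) (auto simp: indicator_def intro: ennreal_leI)
  also have "\<dots> = ennreal c * emeasure lborel {0..T}" by (simp add: nn_integral_cmult_indicator)
  also have "\<dots> = ennreal (c * T)" using assms by (simp add: ennreal_mult)
  finally show ?thesis .
qed

theorem proposition3p2:
  fixes M :: "'w measure" and T :: real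
    and B :: "real \<Rightarrow> 'w \<Rightarrow> real^'d"
    and m :: "'n::finite \<Rightarrow> nat" and A :: "'n \<Rightarrow> (nat \<Rightarrow> real) set"
    and b :: "real \<Rightarrow> real^'d \<Rightarrow> ('n \<Rightarrow> nat \<Rightarrow> real) \<Rightarrow> real^'d"
    and f :: "real \<Rightarrow> real^'d \<Rightarrow> ('n \<Rightarrow> nat \<Rightarrow> real) \<Rightarrow> real^'n"
    and g :: "real^'d \<Rightarrow> real^'n"
    and \<eta> :: "real \<Rightarrow> 'w \<Rightarrow> real^'n"
    and Z :: "real \<Rightarrow> 'w \<Rightarrow> real^'d^'n"
    and \<epsilon> :: real
  assumes prob: "prob_space M"
    and T_pos: "T > 0"
    and BM: "std_brownian M T B"
    and dom: "\<And>i. is_domain_in (m i) (A i)"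
    and b_bdd: "\<exists>C. \<forall>t\<in>{0..T}. \<forall>x. \<forall>a\<in>profiles A. norm (b t x a) \<le> C"
    and f_bdd: "\<exists>C. \<forall>t\<in>{0..T}. \<forall>x. \<forall>a\<in>profiles A. norm (f t x a) \<le> C"
    and g_bdd: "bounded (range g)"
    and b_uc: "\<forall>e>0. \<exists>\<delta>>0. \<forall>t\<in>{0..T}. \<forall>t'\<in>{0..T}. \<forall>x x'. \<forall>a\<in>profiles A. \<forall>a'\<in>profiles A.
        \<bar>t - t'\<bar> < \<delta> \<and> dist x x' < \<delta> \<and> (\<forall>i j. \<bar>a i j - a' i j\<bar> < \<delta>)
        \<longrightarrow> dist (b t x a) (b t' x' a') < e"
    and f_uc: "\<forall>e>0. \<exists>\<delta>>0. \<forall>t\<in>{0..T}. \<forall>t'\<in>{0..T}. \<forall>x x'. \<forall>a\<in>profiles A. \<forall>a'\<in>profiles A.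
        \<bar>t - t'\<bar> < \<delta> \<and> dist x x' < \<delta> \<and> (\<forall>i j. \<bar>a i j - a' i j\<bar> < \<delta>)
        \<longrightarrow> dist (f t x a) (f t' x' a') < e"
    and g_uc: "uniformly_continuous_on UNIV g"
    and H_ne: "\<forall>\<theta>\<in>{0..T} \<times> UNIV. HH A b f \<theta> \<noteq> {}"
    and H_cont: "\<forall>\<theta>\<in>{0..T} \<times> UNIV. \<forall>e>0. \<exists>\<delta>>0. \<forall>\<theta>'\<in>{0..T} \<times> UNIV.
        dist \<theta>' \<theta> < \<delta> \<longrightarrow> hausd (HH A b f \<theta>') (HH A b f \<theta>) < ereal e"
    and eta: "L2proc M (natfilt M T B) T \<eta>"
    and Zin: "L2proc M (natfilt M T B) T Z"
    and eps: "\<epsilon> > 0"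
  shows "\<exists>\<alpha> :: real \<Rightarrow> 'w \<Rightarrow> ('n \<Rightarrow> nat \<Rightarrow> real). \<exists>Z\<epsilon> :: real \<Rightarrow> 'w \<Rightarrow> real^'d^'n.
     progressive (natfilt M T B) T \<alpha>
   \<and> (\<forall>t\<in>{0..T}. \<forall>\<omega>\<in>space M. \<alpha> t \<omega> \<in> profiles A)
   \<and> L2proc M (natfilt M T B) T Z\<epsilon>
   \<and> (\<forall>t\<in>{0..T}. \<forall>\<omega>\<in>space M. \<alpha> t \<omega> \<in> NashEps A b f \<epsilon> (t, B t \<omega>, Z\<epsilon> t \<omega>))
   \<and> (\<integral>\<^sup>+\<omega>. (\<integral>\<^sup>+t\<in>{0..T}. ennreal ((norm (Z\<epsilon> t \<omega> - Z t \<omega>))\<^sup>2) \<partial>lborel) \<partial>M) \<le> ennreal \<epsilon>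
   \<and> (\<integral>\<^sup>+\<omega>. (\<integral>\<^sup>+t\<in>{0..T}. ennreal ((\<bar>norm (\<eta> t \<omega> - hvec b f (t, B t \<omega>, Z t \<omega>) (\<alpha> t \<omega>))
          - infdist (\<eta> t \<omega>) (HH A b f (t, B t \<omega>, Z t \<omega>))\<bar>)\<^sup>2) \<partial>lborel) \<partial>M) \<le> ennreal \<epsilon>"
  
proof -
  interpret P: prob_space M by (rule prob)
  define \<delta>0 where "\<delta>0 = sqrt (\<epsilon> / T)"
  have d0: "\<delta>0 > 0" unfolding \<delta>0_def using eps T_pos by simp
  have d0sq: "\<delta>0\<^sup>2 * T = \<epsilon>" unfolding \<delta>0_def using eps T_pos by simp
  have hc: "\<And>t0 x0 z0 \<kappa>. t0 \<in> {0..T} \<Longrightarrow> \<kappa> > 0 \<Longrightarrow> \<exists>r>0. \<forall>t x z. t \<in> {0..T} \<longrightarrow> dist (t, x, z) (t0, x0, z0) < r \<longrightarrow>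
     (\<forall>a\<in>profiles A. \<forall>i. \<bar>hh b f i t x (z$i) a - hh b f i t0 x0 (z0$i) a\<bar> < \<kappa>)"
    by (rule hh_cont[OF b_bdd b_uc f_uc])
  define P where "P = {p :: ((real \<times> (real^'d) \<times> (real^'d^'n)) \<times> (real^'n)). fst (fst p) \<in> {0..T}}"
  define good where "good p a \<longleftrightarrow> a \<in> NashEps A b f \<epsilon> (fst p) \<and>
     \<bar>norm (snd p - hvec b f (fst p) a) - infdist (snd p) (HH A b f (fst p))\<bar> \<le> \<delta>0" for p a
  have loc: "\<exists>r>0. \<exists>a. \<forall>p\<in>P. dist p p0 < r \<longrightarrow> good p a" if p0: "p0 \<in> P" for p0
  proof -
    obtain t0 x0 z0 y0 where p0e: "p0 = ((t0, x0, z0), y0)" by (metis prod.collapse)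
    have t0: "t0 \<in> {0..T}" using p0 p0e unfolding P_def by simp
    obtain r a where r: "r > 0" and R: "\<forall>t x z y. t \<in> {0..T} \<longrightarrow> dist ((t, x, z), y) ((t0, x0, z0), y0) < r \<longrightarrow>
     a \<in> NashEps A b f \<epsilon> (t, x, z) \<and>
     \<bar>norm (y - hvec b f (t, x, z) a) - infdist y (HH A b f (t, x, z))\<bar> \<le> \<delta>0"
      using local_good[OF hc H_ne H_cont eps d0 t0, of x0 z0 y0] by blast
    show ?thesis
    proof (intro exI[of _ r] conjI r exI[of _ a] ballI impI)
      fix p assume "p \<in> P" "dist p p0 < r"
      moreover obtain t x z y where "p = ((t, x, z), y)" by (metis prod.collapse)
      ultimately show "good p a" using R p0e unfolding P_def good_def by auto
    qed
  qed
  obtain \<phi> where \<phi>m: "\<phi> \<in> borel_measurable borel" and \<phi>g: "\<forall>p\<in>P. good p (\<phi> p)"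
    using countable_select[of P good, OF loc] by blast
  define \<alpha> where "\<alpha> t \<omega> = \<phi> ((t, B t \<omega>, Z t \<omega>), \<eta> t \<omega>)" for t \<omega>
  have goodtw: "good ((t, B t \<omega>, Z t \<omega>), \<eta> t \<omega>) (\<alpha> t \<omega>)" if "t \<in> {0..T}" for t \<omega>
    using \<phi>g that unfolding P_def \<alpha>_def by auto
  show ?thesis
  proof (intro exI[of _ \<alpha>] exI[of _ Z] conjI)
    show "progressive (natfilt M T B) T \<alpha>"
      unfolding progressive_def
    proof
      fix t assume t: "t \<in> {0..T}"
      let ?Q = "restrict_space lborel {0..t} \<Otimes>\<^sub>M natfilt M T B t"
      have m1: "(\<lambda>x. fst x) \<in> borel_measurable ?Q"
        by (rule measurable_compose[OF measurable_fst]) (simp add: measurable_restrict_space1)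
      have m2: "(\<lambda>(s, \<omega>). B s \<omega>) \<in> borel_measurable ?Q" by (rule B_prog[OF BM t])
      have m3: "(\<lambda>(s, \<omega>). Z s \<omega>) \<in> borel_measurable ?Q" using Zin t unfolding L2proc_def progressive_def by blast
      have m4: "(\<lambda>(s, \<omega>). \<eta> s \<omega>) \<in> borel_measurable ?Q" using eta t unfolding L2proc_def progressive_def by blast
      have "(\<lambda>x. ((fst x, (\<lambda>(s, \<omega>). B s \<omega>) x, (\<lambda>(s, \<omega>). Z s \<omega>) x), (\<lambda>(s, \<omega>). \<eta> s \<omega>) x)) \<in> borel_measurable ?Q"
        by (intro borel_measurable_Pair m1 m2 m3 m4)
      from measurable_compose[OF this \<phi>m]
      show "(\<lambda>(s, \<omega>). \<alpha> s \<omega>) \<in> borel_measurable ?Q"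
        unfolding \<alpha>_def by (simp add: case_prod_beta)
    qed
    show "\<forall>t\<in>{0..T}. \<forall>\<omega>\<in>space M. \<alpha> t \<omega> \<in> profiles A"
      using goodtw unfolding good_def NashEps_def by auto
    show "L2proc M (natfilt M T B) T Z" by (rule Zin)
    show "\<forall>t\<in>{0..T}. \<forall>\<omega>\<in>space M. \<alpha> t \<omega> \<in> NashEps A b f \<epsilon> (t, B t \<omega>, Z t \<omega>)"
      using goodtw unfolding good_def by auto
    show "(\<integral>\<^sup>+\<omega>. (\<integral>\<^sup>+t\<in>{0..T}. ennreal ((norm (Z t \<omega> - Z t \<omega>))\<^sup>2) \<partial>lborel) \<partial>M) \<le> ennreal \<epsilon>"
      by simp
    have inner: "(\<integral>\<^sup>+t\<in>{0..T}. ennreal ((\<bar>norm (\<eta> t \<omega> - hvec b f (t, B t \<omega>, Z t \<omega>) (\<alpha> t \<omega>))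
          - infdist (\<eta> t \<omega>) (HH A b f (t, B t \<omega>, Z t \<omega>))\<bar>)\<^sup>2) \<partial>lborel) \<le> ennreal \<epsilon>" for \<omega>
    proof -
      have "\<forall>t\<in>{0..T}. (\<bar>norm (\<eta> t \<omega> - hvec b f (t, B t \<omega>, Z t \<omega>) (\<alpha> t \<omega>))
          - infdist (\<eta> t \<omega>) (HH A b f (t, B t \<omega>, Z t \<omega>))\<bar>)\<^sup>2 \<le> \<delta>0\<^sup>2"
      proof
        fix t assume "t \<in> {0..T}"
        then have "\<bar>norm (\<eta> t \<omega> - hvec b f (t, B t \<omega>, Z t \<omega>) (\<alpha> t \<omega>))
          - infdist (\<eta> t \<omega>) (HH A b f (t, B t \<omega>, Z t \<omega>))\<bar> \<le> \<delta>0"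
          using goodtw unfolding good_def by auto
        then show "(\<bar>norm (\<eta> t \<omega> - hvec b f (t, B t \<omega>, Z t \<omega>) (\<alpha> t \<omega>))
          - infdist (\<eta> t \<omega>) (HH A b f (t, B t \<omega>, Z t \<omega>))\<bar>)\<^sup>2 \<le> \<delta>0\<^sup>2"
          by (intro power_mono) auto
      qed
      from set_nn_bound[OF this _ less_imp_le[OF T_pos]] show ?thesis using d0sq by simp
    qed
    have "(\<integral>\<^sup>+\<omega>. (\<integral>\<^sup>+t\<in>{0..T}. ennreal ((\<bar>norm (\<eta> t \<omega> - hvec b f (t, B t \<omega>, Z t \<omega>) (\<alpha> t \<omega>))
          - infdist (\<eta> t \<omega>) (HH A b f (t, B t \<omega>, Z t \<omega>))\<bar>)\<^sup>2) \<partial>lborel) \<partial>M) \<le> (\<integral>\<^sup>+\<omega>. ennreal \<epsilon> \<partial>M)"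
      by (intro nn_integral_mono inner)
    also have "\<dots> = ennreal \<epsilon>" by (simp add: P.emeasure_space_1)
    finally show "(\<integral>\<^sup>+\<omega>. (\<integral>\<^sup>+t\<in>{0..T}. ennreal ((\<bar>norm (\<eta> t \<omega> - hvec b f (t, B t \<omega>, Z t \<omega>) (\<alpha> t \<omega>))
          - infdist (\<eta> t \<omega>) (HH A b f (t, B t \<omega>, Z t \<omega>))\<bar>)\<^sup>2) \<partial>lborel) \<partial>M) \<le> ennreal \<epsilon>" .
  qed
qed

end
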